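(* For any probability measures $\mu,\mu_1,\mu_2$ on $\mathbb{R}^n,\mathbb{R}^{n_1},\mathbb{R}^{n_2}$ satisfying $\mathrm{IC}(\beta)$, $\mathrm{IC}(\beta_1)$, $\mathrm{IC}(\beta_2)$ respectively: 1. If $L$ is an affine map, then $L_{\#}\mu$ satisfies $\mathrm{IC}(\beta)$. 2. The product $\mu_1\otimes\mu_2$ satisfies $\mathrm{IC}(\beta_1\vee\beta_2)$. 3. If $n_1=n_2$, then the convolution $\mu_1*\mu_2$ satisfies $\mathrm{IC}(\beta_1\vee\beta_2)$. 4. The symmetrization $\overline{\mu}$ satisfies $\mathrm{IC}(\beta)$.
   Context: $T_{\#}\mu(A)=\mu(T^{-1}(A))$ is the push-forward; $x\vee y=\max\{x,y\}$. A pair $(\mu,W)$, with $\mu$ a probability measure on $\mathbb{R}^n$ and $W:\mathbb{R}^n\to[0,\infty]$, satisfies property $(\tau)$ if for every bounded function $f$, $\int e^{h}\,d\mu\int e^{-f}\,d\mu\le 1$, where $h(x)=\inf_{y}\{W(x-y)+f(y)\}$ is the infimum convolution of $W$ and $f$. For a measure $\mu$, $\mu'$ is its reflection through the origin, $\overline{\mu}=\mu*\mu'$, $\Lambda_\mu=\ln\int e^{\langle \cdot,y\rangle}d\mu(y)$, and $\Lambda^*_\mu(x)=\sup_y\{\langle x,y\rangle-\Lambda_\mu(y)\}$. A probability measure $\mu$ satisfies $\mathrm{IC}(\beta)$ ($\beta>0$) if the pair $(\mu,\Lambda^*_{\overline{\mu}}(\cdot/\beta))$ satisfies property $(\tau)$.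 *)

theory Defs
  imports "HOL-Probability.Probability"
begin

definition exp_ereal :: "ereal \<Rightarrow> ennreal" where
  "exp_ereal x = (case x of ereal r \<Rightarrow> ennreal (exp r) | PInfty \<Rightarrow> \<infinity> | MInfty \<Rightarrow> 0)"

definition ln_ennreal :: "ennreal \<Rightarrow> ereal" where
  "ln_ennreal x = (if x = \<infinity> then \<infinity> else if x = 0 then -\<infinity> else ereal (ln (enn2real x)))"

definition inf_conv :: "('a::real_vector \<Rightarrow> ereal) \<Rightarrow> ('a \<Rightarrow> real) \<Rightarrow> 'a \<Rightarrow> ereal" where
  "inf_conv W f x = (INF y. W (x - y) + ereal (f y))"

definition property_tau :: "'a::euclidean_space measure \<Rightarrow> ('a \<Rightarrow> ereal) \<Rightarrow> bool" where
  "property_tau M W \<longleftrightarrow>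
     (\<forall>f. f \<in> borel_measurable borel \<longrightarrow> bounded (range f) \<longrightarrow>
        (\<integral>\<^sup>+ x. exp_ereal (inf_conv W f x) \<partial>M) * (\<integral>\<^sup>+ x. ennreal (exp (- f x)) \<partial>M) \<le> 1)"

definition reflect :: "'a::euclidean_space measure \<Rightarrow> 'a measure" where
  "reflect M = distr M borel uminus"

definition conv :: "'a::euclidean_space measure \<Rightarrow> 'a measure \<Rightarrow> 'a measure" where
  "conv M N = distr (M \<Otimes>\<^sub>M N) borel (\<lambda>(x, y). x + y)"

definition symmetrization :: "'a::euclidean_space measure \<Rightarrow> 'a measure" where
  "symmetrization M = conv M (reflect M)"

definition log_laplace :: "'a::euclidean_space measure \<Rightarrow> 'a \<Rightarrow> ereal" where
  "log_laplace M y = ln_ennreal (\<integral>\<^sup>+ x. ennreal (exp (y \<bullet> x)) \<partial>M)"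

definition legendre_log_laplace :: "'a::euclidean_space measure \<Rightarrow> 'a \<Rightarrow> ereal" where
  "legendre_log_laplace M x = (SUP y. ereal (x \<bullet> y) - log_laplace M y)"

definition IC :: "real \<Rightarrow> 'a::euclidean_space measure \<Rightarrow> bool" where
  "IC \<beta> M \<longleftrightarrow> property_tau M (\<lambda>x. legendre_log_laplace (symmetrization M) (x /\<^sub>R \<beta>))"

definition is_prob_on_borel :: "'a::euclidean_space measure \<Rightarrow> bool" where
  "is_prob_on_borel M \<longleftrightarrow> prob_space M \<and> sets M = sets borel"

end

theory Submission
  imports Defs
begin


lemma nn_integral_minorant:
  "\<exists>G\<in>borel_measurable M. (\<forall>x. G x \<le> f x) \<and> integral\<^sup>N M G = integral\<^sup>N M f"
proof -
  let ?A = "{g. simple_function M g \<and> g \<le> f}"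
  have ne: "integral\<^sup>S M ` ?A \<noteq> {}"
  proof -
    have "(\<lambda>_. 0) \<in> ?A" by (auto simp: le_fun_def)
    then show ?thesis by blast
  qed
  obtain s :: "nat \<Rightarrow> ennreal" where s: "range s \<subseteq> integral\<^sup>S M ` ?A" "Sup (integral\<^sup>S M ` ?A) = (SUP i. s i)"
    using ennreal_Sup_countable_SUP[OF ne] by blast
  have "\<forall>i. \<exists>g. g \<in> ?A \<and> integral\<^sup>S M g = s i"
  proof
    fix i
    have "s i \<in> integral\<^sup>S M ` ?A" using s(1) by blast
    then show "\<exists>g. g \<in> ?A \<and> integral\<^sup>S M g = s i" by (metis (no_types, lifting) imageE)
  qed
  then obtain g where g: "\<And>i. g i \<in> ?A" "\<And>i. integral\<^sup>S M (g i) = s i" by metis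
  define G where "G x = (SUP i. g i x)" for x
  have Gm: "G \<in> borel_measurable M"
  proof -
    have [measurable]: "g i \<in> borel_measurable M" for i using g(1) by (auto intro: borel_measurable_simple_function)
    show ?thesis unfolding G_def by measurable
  qed
  have Gle: "\<forall>x. G x \<le> f x" unfolding G_def using g(1) by (auto simp: le_fun_def intro!: SUP_least)
  have "integral\<^sup>N M f \<le> integral\<^sup>N M G"
  proof -
    have "integral\<^sup>N M f = (SUP i. s i)" unfolding nn_integral_def using s(2) by simp
    also have "\<dots> \<le> integral\<^sup>N M G"
    proof (rule SUP_least)
      fix i
      have "s i = integral\<^sup>N M (g i)" using g by (simp add: nn_integral_eq_simple_integral)
      also have "\<dots> \<le> integral\<^sup>N M G" unfolding G_def by (intro nn_integral_mono) (auto intro: SUP_upper)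
      finally show "s i \<le> integral\<^sup>N M G" .
    qed
    finally show ?thesis .
  qed
  moreover have "integral\<^sup>N M G \<le> integral\<^sup>N M f" using Gle by (intro nn_integral_mono) auto
  ultimately show ?thesis using Gm Gle by (intro bexI[of _ G]) auto
qed

lemma nn_integral_distr_le:
  assumes T: "T \<in> measurable M N"
  shows "integral\<^sup>N (distr M N T) g \<le> (\<integral>\<^sup>+x. g (T x) \<partial>M)"
proof -
  obtain G where G: "G \<in> borel_measurable (distr M N T)" "\<forall>x. G x \<le> g x"
    "integral\<^sup>N (distr M N T) G = integral\<^sup>N (distr M N T) g"
    using nn_integral_minorant by blast
  have Gm: "G \<in> borel_measurable N" using G(1) by simp
  have "integral\<^sup>N (distr M N T) g = (\<integral>\<^sup>+x. G (T x) \<partial>M)"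
    using G(3) nn_integral_distr[OF T G(1)] by simp
  also have "\<dots> \<le> (\<integral>\<^sup>+x. g (T x) \<partial>M)" using G(2) by (intro nn_integral_mono) auto
  finally show ?thesis .
qed

lemma nn_integral_pair_le:
  assumes "sigma_finite_measure M2"
  shows "integral\<^sup>N (M1 \<Otimes>\<^sub>M M2) g \<le> (\<integral>\<^sup>+x. \<integral>\<^sup>+y. g (x, y) \<partial>M2 \<partial>M1)"
proof -
  obtain G where G: "G \<in> borel_measurable (M1 \<Otimes>\<^sub>M M2)" "\<forall>x. G x \<le> g x"
    "integral\<^sup>N (M1 \<Otimes>\<^sub>M M2) G = integral\<^sup>N (M1 \<Otimes>\<^sub>M M2) g"
    using nn_integral_minorant by blast
  have "integral\<^sup>N (M1 \<Otimes>\<^sub>M M2) g = (\<integral>\<^sup>+x. \<integral>\<^sup>+y. G (x, y) \<partial>M2 \<partial>M1)"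
    using G(3) sigma_finite_measure.nn_integral_fst[OF assms G(1)] by simp
  also have "\<dots> \<le> (\<integral>\<^sup>+x. \<integral>\<^sup>+y. g (x, y) \<partial>M2 \<partial>M1)"
    using G(2) by (intro nn_integral_mono) auto
  finally show ?thesis .
qed

lemma nn_integral_cmult_le:
  assumes "c < top"
  shows "(\<integral>\<^sup>+x. c * g x \<partial>M) \<le> c * integral\<^sup>N M g"
proof (cases "c = 0")
  case True then show ?thesis by simp
next
  case False
  obtain G where G: "G \<in> borel_measurable M" "\<forall>x. G x \<le> c * g x"
    "integral\<^sup>N M G = (\<integral>\<^sup>+x. c * g x \<partial>M)"
    using nn_integral_minorant[of M "\<lambda>x. c * g x"] by blast
  have eq: "G x = c * (G x / c)" for x
    using False assms by (metis arithmetic_simps(78) ennreal_divide_self ennreal_divide_times)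
  have le: "G x / c \<le> g x" for x
    using G(2)[rule_format, of x] False assms
    using divide_le_posI_ennreal zero_order(5) by blast
  have "(\<integral>\<^sup>+x. c * g x \<partial>M) = (\<integral>\<^sup>+x. c * (G x / c) \<partial>M)"
    using G(3) eq by (metis (no_types, lifting) nn_integral_cong)
  also have "\<dots> = c * (\<integral>\<^sup>+x. G x / c \<partial>M)"
    using G(1) by (intro nn_integral_cmult) auto
  also have "\<dots> \<le> c * integral\<^sup>N M g"
    using le by (intro mult_left_mono nn_integral_mono) auto
  finally show ?thesis .
qed



definition lap :: "'a::euclidean_space measure \<Rightarrow> 'a \<Rightarrow> ennreal" where
  "lap M y = (\<integral>\<^sup>+x. ennreal (exp (y \<bullet> x)) \<partial>M)"

lemma log_laplace_lap: "log_laplace M y = ln_ennreal (lap M y)"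
  by (simp add: log_laplace_def lap_def)

lemma pob_D: assumes "is_prob_on_borel M" shows "prob_space M" "sets M = sets borel"
  using assms by (auto simp: is_prob_on_borel_def)

lemma pob_meas:
  assumes "is_prob_on_borel M" shows "measurable M N = measurable borel N"
  using pob_D(2)[OF assms] by (intro measurable_cong_sets) auto

lemma sets_measI: "sets M = sets borel \<Longrightarrow> f \<in> measurable borel N \<Longrightarrow> f \<in> measurable M N"
  by (metis measurable_cong_sets)

lemma pob_measI: "is_prob_on_borel M \<Longrightarrow> f \<in> measurable borel N \<Longrightarrow> f \<in> measurable M N"
  using sets_measI pob_D(2) by blast

lemma pob_pair:
  assumes "is_prob_on_borel M1" "is_prob_on_borel M2"
  shows "is_prob_on_borel (M1 \<Otimes>\<^sub>M M2)"
proof -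
  have "sets (M1 \<Otimes>\<^sub>M M2) = sets (borel \<Otimes>\<^sub>M borel)"
    using pob_D(2)[OF assms(1)] pob_D(2)[OF assms(2)] by (intro sets_pair_measure_cong) auto
  then have "sets (M1 \<Otimes>\<^sub>M M2) = sets borel" by (metis borel_prod)
  then show ?thesis using prob_space_pair[OF pob_D(1)[OF assms(1)] pob_D(1)[OF assms(2)]]
    by (simp add: is_prob_on_borel_def)
qed

lemma pob_distr:
  assumes "is_prob_on_borel M" "f \<in> borel_measurable borel"
  shows "is_prob_on_borel (distr M borel f)"
proof -
  have "f \<in> borel_measurable M" using assms pob_measI by blast
  then show ?thesis using prob_space.prob_space_distr[OF pob_D(1)[OF assms(1)], of f borel]
    by (simp add: is_prob_on_borel_def)
qed

lemma cont_meas: "continuous_on UNIV f \<Longrightarrow> f \<in> borel_measurable borel"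
  by (rule borel_measurable_continuous_onI)

lemma pob_reflect: "is_prob_on_borel M \<Longrightarrow> is_prob_on_borel (reflect M)"
  unfolding reflect_def by (rule pob_distr) auto

lemma pob_conv:
  assumes "is_prob_on_borel M" "is_prob_on_borel N"
  shows "is_prob_on_borel (conv M N)"
  unfolding conv_def by (rule pob_distr[OF pob_pair[OF assms]]) (unfold case_prod_beta, intro cont_meas continuous_intros)

lemma pob_sym: "is_prob_on_borel M \<Longrightarrow> is_prob_on_borel (symmetrization M)"
  unfolding symmetrization_def by (intro pob_conv pob_reflect)

lemma expm: "(\<lambda>x. ennreal (exp (y \<bullet> x))) \<in> borel_measurable borel"
proof -
  have [measurable]: "(\<lambda>x. exp (y \<bullet> x)) \<in> borel_measurable borel"
    by (intro cont_meas continuous_intros)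
  show ?thesis by measurable
qed

lemma lap_nonzero:
  assumes "is_prob_on_borel M" shows "lap M y \<noteq> 0"
proof
  assume "lap M y = 0"
  moreover have "(\<lambda>x. ennreal (exp (y \<bullet> x))) \<in> borel_measurable M"
    by (intro pob_measI[OF assms] expm)
  ultimately have "AE x in M. ennreal (exp (y \<bullet> x)) = 0"
    unfolding lap_def by (simp add: nn_integral_0_iff_AE)
  then have "AE x in M. False" by simp
  then show False using prob_space.AE_False[OF pob_D(1)[OF assms]] by simp
qed

lemma pair_prod_int:
  assumes "sigma_finite_measure N" "f \<in> borel_measurable M" "g \<in> borel_measurable N"
  shows "(\<integral>\<^sup>+z. f (fst z) * g (snd z) \<partial>(M \<Otimes>\<^sub>M N)) = integral\<^sup>N M f * integral\<^sup>N N g"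
proof -
  have m: "(\<lambda>z. f (fst z) * g (snd z)) \<in> borel_measurable (M \<Otimes>\<^sub>M N)"
    using assms by measurable
  have "(\<integral>\<^sup>+z. f (fst z) * g (snd z) \<partial>(M \<Otimes>\<^sub>M N)) = (\<integral>\<^sup>+x. \<integral>\<^sup>+y. f x * g y \<partial>N \<partial>M)"
    using sigma_finite_measure.nn_integral_fst[OF assms(1) m] by simp
  also have "\<dots> = (\<integral>\<^sup>+x. f x * integral\<^sup>N N g \<partial>M)"
    using assms by (intro nn_integral_cong nn_integral_cmult) auto
  also have "\<dots> = integral\<^sup>N M f * integral\<^sup>N N g"
    using assms by (intro nn_integral_multc) auto
  finally show ?thesis .
qed

lemma sym_lap:
  assumes "is_prob_on_borel M"
  shows "lap (symmetrization M) y = lap M y * lap M (-y)"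
proof -
  let ?R = "reflect M"
  have R: "is_prob_on_borel ?R" using pob_reflect[OF assms] .
  have sR: "sigma_finite_measure ?R" using pob_D(1)[OF R] prob_space_imp_sigma_finite by blast
  have sp: "sets (M \<Otimes>\<^sub>M ?R) = sets borel" using pob_D(2)[OF pob_pair[OF assms R]] .
  have madd: "(\<lambda>(a, b). a + b) \<in> measurable (M \<Otimes>\<^sub>M ?R) borel"
    unfolding case_prod_beta by (intro sets_measI[OF sp] cont_meas continuous_intros)
  have "lap (symmetrization M) y = (\<integral>\<^sup>+z. ennreal (exp (y \<bullet> (fst z + snd z))) \<partial>(M \<Otimes>\<^sub>M ?R))"
    unfolding lap_def symmetrization_def conv_def
    by (subst nn_integral_distr[OF madd]) (auto simp: case_prod_beta)
  also have "\<dots> = (\<integral>\<^sup>+z. ennreal (exp (y \<bullet> fst z)) * ennreal (exp (y \<bullet> snd z)) \<partial>(M \<Otimes>\<^sub>M ?R))"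
    by (intro nn_integral_cong) (simp add: inner_add_right exp_add ennreal_mult)
  also have "\<dots> = lap M y * lap ?R y"
    unfolding lap_def
    by (intro pair_prod_int[OF sR] pob_measI[OF assms] pob_measI[OF R] expm)
  also have "lap ?R y = lap M (-y)"
    unfolding lap_def reflect_def
    by (subst nn_integral_distr) (auto intro: pob_measI[OF assms] expm)
  finally show ?thesis .
qed



lemma ln_ennreal_mult:
  assumes "a \<noteq> 0" "b \<noteq> 0"
  shows "ln_ennreal (a * b) = ln_ennreal a + ln_ennreal b"
proof (cases "a = top \<or> b = top")
  case True
  then have "a * b = top" using assms by (auto simp: ennreal_mult_eq_top_iff)
  moreover have "ln_ennreal a \<noteq> -\<infinity>" "ln_ennreal b \<noteq> -\<infinity>" using assms by (auto simp: ln_ennreal_def)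
  ultimately show ?thesis using True by (auto simp: ln_ennreal_def)
next
  case False
  then have "a * b \<noteq> top" "a * b \<noteq> 0" using assms by (auto simp: ennreal_mult_eq_top_iff)
  moreover have "enn2real a > 0" "enn2real b > 0" using assms False
    by (auto simp: enn2real_positive_iff top.not_eq_extremum zero_less_iff_neq_zero)
  ultimately show ?thesis using False assms
    by (auto simp: ln_ennreal_def enn2real_mult ln_mult)
qed

lemma ln_ennreal_mono:
  assumes "a \<noteq> 0" "a \<le> b" shows "ln_ennreal a \<le> ln_ennreal b"
proof (cases "b = top")
  case True then show ?thesis by (simp add: ln_ennreal_def)
next
  case False
  then have "a \<noteq> top" using assms top_unique by auto
  moreover have "enn2real a > 0" using assms \<open>a \<noteq> top\<close>
    by (auto simp: enn2real_positive_iff top.not_eq_extremum zero_less_iff_neq_zero)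
  moreover have "enn2real a \<le> enn2real b" using assms False by (intro enn2real_mono) (auto simp: top.not_eq_extremum)
  ultimately show ?thesis using False assms by (auto simp: ln_ennreal_def)
qed

lemma ln_ennreal_not_minf: "a \<noteq> 0 \<Longrightarrow> ln_ennreal a \<noteq> -\<infinity>"
  by (auto simp: ln_ennreal_def)

lemma loglap_zero: assumes "is_prob_on_borel M" shows "log_laplace M 0 = 0"
proof -
  have "lap M 0 = 1" unfolding lap_def
    using prob_space.emeasure_space_1[OF pob_D(1)[OF assms]] by simp
  then show ?thesis by (simp add: log_laplace_lap ln_ennreal_def)
qed

lemma legendre_nonneg: assumes "is_prob_on_borel M" shows "legendre_log_laplace M x \<ge> 0"
proof -
  have "ereal (x \<bullet> 0) - log_laplace M 0 \<le> legendre_log_laplace M x"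
    unfolding legendre_log_laplace_def by (rule SUP_upper) auto
  then show ?thesis using loglap_zero[OF assms] by (simp add: zero_ereal_def)
qed

lemma loglap_not_minf: "is_prob_on_borel M \<Longrightarrow> log_laplace M y \<noteq> -\<infinity>"
  by (simp add: log_laplace_lap ln_ennreal_not_minf lap_nonzero)

lemma cosh_ineq:
  fixes s t :: real assumes "0 \<le> t" "t \<le> 1"
  shows "exp (t * s) + exp (- (t * s)) \<le> exp s + exp (- s)"
proof -
  have "\<bar>t * s\<bar> \<le> \<bar>s\<bar>" using assms by (simp add: abs_mult mult_left_le_one_le)
  then have "cosh \<bar>t * s\<bar> \<le> cosh \<bar>s\<bar>" by (subst cosh_real_nonneg_le_iff) auto
  then have "cosh (t * s) \<le> cosh s" by simp
  then show ?thesis by (simp add: cosh_field_def)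
qed

lemma LL_int:
  assumes "is_prob_on_borel M"
  shows "lap M y * lap M (-y) = (\<integral>\<^sup>+z. ennreal (exp (y \<bullet> fst z - y \<bullet> snd z)) \<partial>(M \<Otimes>\<^sub>M M))"
proof -
  have sM: "sigma_finite_measure M" using pob_D(1)[OF assms] prob_space_imp_sigma_finite by blast
  have "lap M y * lap M (-y) = (\<integral>\<^sup>+z. ennreal (exp (y \<bullet> fst z)) * ennreal (exp ((-y) \<bullet> snd z)) \<partial>(M \<Otimes>\<^sub>M M))"
    unfolding lap_def by (intro pair_prod_int[OF sM, symmetric] pob_measI[OF assms] expm)
  also have "\<dots> = (\<integral>\<^sup>+z. ennreal (exp (y \<bullet> fst z - y \<bullet> snd z)) \<partial>(M \<Otimes>\<^sub>M M))"
    by (intro nn_integral_cong) (simp add: exp_diff ennreal_mult[symmetric] exp_minus field_simps)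
  finally show ?thesis .
qed

lemma LL_two:
  assumes "is_prob_on_borel M"
  shows "2 * (lap M y * lap M (-y)) = (\<integral>\<^sup>+z. ennreal (exp (y \<bullet> fst z - y \<bullet> snd z) + exp (- (y \<bullet> fst z - y \<bullet> snd z))) \<partial>(M \<Otimes>\<^sub>M M))"
proof -
  have sp: "sets (M \<Otimes>\<^sub>M M) = sets borel" using pob_D(2)[OF pob_pair[OF assms assms]] .
  have m1: "(\<lambda>z. ennreal (exp (y \<bullet> fst z - y \<bullet> snd z))) \<in> borel_measurable (M \<Otimes>\<^sub>M M)"
  proof -
    have [measurable]: "(\<lambda>z. exp (y \<bullet> fst z - y \<bullet> snd z)) \<in> borel_measurable borel"
      by (intro cont_meas continuous_intros)
    show ?thesis by (intro sets_measI[OF sp]) measurable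
  qed
  have m2: "(\<lambda>z. ennreal (exp (- (y \<bullet> fst z - y \<bullet> snd z)))) \<in> borel_measurable (M \<Otimes>\<^sub>M M)"
  proof -
    have [measurable]: "(\<lambda>z. exp (- (y \<bullet> fst z - y \<bullet> snd z))) \<in> borel_measurable borel"
      by (intro cont_meas continuous_intros)
    show ?thesis by (intro sets_measI[OF sp]) measurable
  qed
  have e2: "lap M y * lap M (-y) = (\<integral>\<^sup>+z. ennreal (exp (- (y \<bullet> fst z - y \<bullet> snd z))) \<partial>(M \<Otimes>\<^sub>M M))"
    using LL_int[OF assms, of "-y"] by (simp add: mult.commute)
  have "2 * (lap M y * lap M (-y)) = lap M y * lap M (-y) + lap M y * lap M (-y)"
    by (simp add: mult_2)
  also have "\<dots> = (\<integral>\<^sup>+z. ennreal (exp (y \<bullet> fst z - y \<bullet> snd z)) + ennreal (exp (- (y \<bullet> fst z - y \<bullet> snd z))) \<partial>(M \<Otimes>\<^sub>M M))"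
    using LL_int[OF assms, of y] e2 nn_integral_add[OF m1 m2] by simp
  also have "\<dots> = (\<integral>\<^sup>+z. ennreal (exp (y \<bullet> fst z - y \<bullet> snd z) + exp (- (y \<bullet> fst z - y \<bullet> snd z))) \<partial>(M \<Otimes>\<^sub>M M))"
    by (intro nn_integral_cong) (simp add: ennreal_plus)
  finally show ?thesis .
qed

lemma lap_sym_mono:
  assumes "is_prob_on_borel M" "0 \<le> t" "t \<le> 1"
  shows "lap (symmetrization M) (t *\<^sub>R y) \<le> lap (symmetrization M) y"
proof -
  have "2 * lap (symmetrization M) (t *\<^sub>R y) \<le> 2 * lap (symmetrization M) y"
    unfolding sym_lap[OF assms(1)] LL_two[OF assms(1)]
  proof (intro nn_integral_mono ennreal_leI)
    fix z :: "'a \<times> 'a"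
    show "exp ((t *\<^sub>R y) \<bullet> fst z - (t *\<^sub>R y) \<bullet> snd z) + exp (- ((t *\<^sub>R y) \<bullet> fst z - (t *\<^sub>R y) \<bullet> snd z))
       \<le> exp (y \<bullet> fst z - y \<bullet> snd z) + exp (- (y \<bullet> fst z - y \<bullet> snd z))"
      using cosh_ineq[OF assms(2,3), of "y \<bullet> fst z - y \<bullet> snd z"] by (simp add: right_diff_distrib)
  qed
  then show ?thesis by (simp add: ennreal_mult_le_mult_iff)
qed

lemma legendre_mono:
  assumes "is_prob_on_borel M" "0 < \<beta>1" "\<beta>1 \<le> \<beta>"
  shows "legendre_log_laplace (symmetrization M) (x /\<^sub>R \<beta>) \<le> legendre_log_laplace (symmetrization M) (x /\<^sub>R \<beta>1)"
  unfolding legendre_log_laplace_def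
proof (rule SUP_least)
  fix y
  define t where "t = \<beta>1 / \<beta>"
  have t: "0 \<le> t" "t \<le> 1" using assms by (auto simp: t_def)
  have S: "is_prob_on_borel (symmetrization M)" using pob_sym[OF assms(1)] .
  have ip: "(x /\<^sub>R \<beta>) \<bullet> y = (x /\<^sub>R \<beta>1) \<bullet> (t *\<^sub>R y)" using assms by (simp add: t_def field_simps)
  have "log_laplace (symmetrization M) (t *\<^sub>R y) \<le> log_laplace (symmetrization M) y"
    unfolding log_laplace_lap
    by (intro ln_ennreal_mono lap_nonzero[OF S] lap_sym_mono[OF assms(1) t])
  then have "ereal ((x /\<^sub>R \<beta>) \<bullet> y) - log_laplace (symmetrization M) y
      \<le> ereal ((x /\<^sub>R \<beta>1) \<bullet> (t *\<^sub>R y)) - log_laplace (symmetrization M) (t *\<^sub>R y)"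
    unfolding ip by (intro ereal_minus_mono) auto
  also have "\<dots> \<le> (SUP y. ereal ((x /\<^sub>R \<beta>1) \<bullet> y) - log_laplace (symmetrization M) y)"
    by (rule SUP_upper) auto
  finally show "ereal ((x /\<^sub>R \<beta>) \<bullet> y) - log_laplace (symmetrization M) y
      \<le> (SUP y. ereal ((x /\<^sub>R \<beta>1) \<bullet> y) - log_laplace (symmetrization M) y)" .
qed



lemma exp_ereal_mono: "a \<le> b \<Longrightarrow> exp_ereal a \<le> exp_ereal b"
  by (cases a; cases b) (auto simp: exp_ereal_def ennreal_leI)

lemma IC_affine:
  fixes M :: "'a::euclidean_space measure" and A :: "'a \<Rightarrow> 'b::euclidean_space"
  assumes pob: "is_prob_on_borel M" and b: "\<beta> > 0" and ic: "IC \<beta> M"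
    and lin: "linear A" and Ldef: "\<forall>x. L x = A x + c"
  shows "IC \<beta> (distr M borel L)"
proof -
  have Leq: "L = (\<lambda>x. A x + c)" using Ldef by auto
  have bl: "bounded_linear A" using lin linear_conv_bounded_linear by blast
  have Lb: "L \<in> borel_measurable borel"
    unfolding Leq by (intro cont_meas continuous_intros linear_continuous_on bl)
  have LM: "L \<in> measurable M borel" using pob_measI[OF pob Lb] .
  define N where "N = distr M borel L"
  have pN: "is_prob_on_borel N" unfolding N_def by (rule pob_distr[OF pob Lb])
  have lapN: "lap N y = ennreal (exp (y \<bullet> c)) * lap M (adjoint A y)" for y
  proof -
    have "lap N y = (\<integral>\<^sup>+x. ennreal (exp (y \<bullet> L x)) \<partial>M)"
      unfolding lap_def N_def by (rule nn_integral_distr[OF LM]) (simp add: expm)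
    also have "\<dots> = (\<integral>\<^sup>+x. ennreal (exp (y \<bullet> c)) * ennreal (exp (adjoint A y \<bullet> x)) \<partial>M)"
    proof (intro nn_integral_cong)
      fix x
      have "y \<bullet> L x = y \<bullet> c + adjoint A y \<bullet> x"
        using adjoint_works[OF lin, of x y] by (simp add: Leq inner_add_right inner_commute)
      then show "ennreal (exp (y \<bullet> L x)) = ennreal (exp (y \<bullet> c)) * ennreal (exp (adjoint A y \<bullet> x))"
        by (simp add: exp_add ennreal_mult)
    qed
    also have "\<dots> = ennreal (exp (y \<bullet> c)) * lap M (adjoint A y)"
      unfolding lap_def by (rule nn_integral_cmult[OF pob_measI[OF pob expm]])
    finally show ?thesis .
  qed
  have lapS: "lap (symmetrization N) y = lap (symmetrization M) (adjoint A y)" for y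
  proof -
    have neg: "adjoint A (-y) = - adjoint A y" using linear_neg[OF adjoint_linear[OF lin]] .
    have e: "ennreal (exp (y \<bullet> c)) * ennreal (exp ((-y) \<bullet> c)) = 1"
      by (simp add: ennreal_mult[symmetric] exp_minus)
    have "lap (symmetrization N) y = (ennreal (exp (y \<bullet> c)) * ennreal (exp ((-y) \<bullet> c))) * (lap M (adjoint A y) * lap M (- adjoint A y))"
      unfolding sym_lap[OF pN] lapN neg by (simp add: ac_simps)
    then show ?thesis unfolding e sym_lap[OF pob] by simp
  qed
  define W where "W z = legendre_log_laplace (symmetrization M) (z /\<^sub>R \<beta>)" for z
  define W' where "W' z = legendre_log_laplace (symmetrization N) (z /\<^sub>R \<beta>)" for z
  have WW: "W' (A z) \<le> W z" for z
    unfolding W'_def W_def legendre_log_laplace_def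
  proof (rule SUP_least)
    fix y
    have ip: "(A z /\<^sub>R \<beta>) \<bullet> y = (z /\<^sub>R \<beta>) \<bullet> adjoint A y"
      using adjoint_works[OF lin, of "z /\<^sub>R \<beta>" y] linear_cmul[OF lin, of "inverse \<beta>" z] by (simp, metis)
    have "ereal ((A z /\<^sub>R \<beta>) \<bullet> y) - log_laplace (symmetrization N) y
       = ereal ((z /\<^sub>R \<beta>) \<bullet> adjoint A y) - log_laplace (symmetrization M) (adjoint A y)"
      unfolding log_laplace_lap lapS ip by (rule refl)
    also have "\<dots> \<le> (SUP y. ereal ((z /\<^sub>R \<beta>) \<bullet> y) - log_laplace (symmetrization M) y)"
      by (rule SUP_upper) auto
    finally show "ereal ((A z /\<^sub>R \<beta>) \<bullet> y) - log_laplace (symmetrization N) y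
       \<le> (SUP y. ereal ((z /\<^sub>R \<beta>) \<bullet> y) - log_laplace (symmetrization M) y)" .
  qed
  have tauM: "property_tau M W" using ic unfolding IC_def W_def .
  have "property_tau N W'"
    unfolding property_tau_def
  proof (intro allI impI)
    fix f :: "'b \<Rightarrow> real"
    assume fm: "f \<in> borel_measurable borel" and fb: "bounded (range f)"
    have fLm: "(\<lambda>x. f (L x)) \<in> borel_measurable borel" using fm Lb by measurable
    have fLb: "bounded (range (\<lambda>x. f (L x)))"
      by (rule bounded_subset[OF fb]) auto
    have tau: "(\<integral>\<^sup>+ x. exp_ereal (inf_conv W (\<lambda>x. f (L x)) x) \<partial>M) * (\<integral>\<^sup>+ x. ennreal (exp (- f (L x))) \<partial>M) \<le> 1"
      using tauM fLm fLb unfolding property_tau_def by blast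
    have pt: "inf_conv W' f (L x) \<le> inf_conv W (\<lambda>x. f (L x)) x" for x
      unfolding inf_conv_def
    proof (rule INF_greatest)
      fix z :: 'a assume "z \<in> UNIV"
      have "(INF y. W' (L x - y) + ereal (f y)) \<le> W' (L x - L z) + ereal (f (L z))"
        by (rule INF_lower) auto
      also have "L x - L z = A (x - z)" by (simp add: Leq linear_diff[OF lin])
      also have "W' (A (x - z)) + ereal (f (L z)) \<le> W (x - z) + ereal (f (L z))"
        using WW by (rule add_right_mono)
      finally show "(INF y. W' (L x - y) + ereal (f y)) \<le> W (x - z) + ereal (f (L z))" .
    qed
    have "(\<integral>\<^sup>+ x. exp_ereal (inf_conv W' f x) \<partial>N) \<le> (\<integral>\<^sup>+ x. exp_ereal (inf_conv W' f (L x)) \<partial>M)"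
      unfolding N_def by (rule nn_integral_distr_le[OF LM])
    also have "\<dots> \<le> (\<integral>\<^sup>+ x. exp_ereal (inf_conv W (\<lambda>x. f (L x)) x) \<partial>M)"
      by (intro nn_integral_mono exp_ereal_mono pt)
    finally have I1: "(\<integral>\<^sup>+ x. exp_ereal (inf_conv W' f x) \<partial>N) \<le> (\<integral>\<^sup>+ x. exp_ereal (inf_conv W (\<lambda>x. f (L x)) x) \<partial>M)" .
    have I2: "(\<integral>\<^sup>+ x. ennreal (exp (- f x)) \<partial>N) = (\<integral>\<^sup>+ x. ennreal (exp (- f (L x))) \<partial>M)"
      unfolding N_def using fm by (intro nn_integral_distr[OF LM]) simp
    show "(\<integral>\<^sup>+ x. exp_ereal (inf_conv W' f x) \<partial>N) * (\<integral>\<^sup>+ x. ennreal (exp (- f x)) \<partial>N) \<le> 1"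
      unfolding I2 using tau I1 by (meson mult_right_mono order_trans zero_le)
  qed
  then show ?thesis unfolding IC_def W'_def N_def .
qed



lemma ereal_le_add_INF:
  assumes "\<And>y. (x::ereal) \<le> ereal w + T y" shows "x \<le> ereal w + (INF y. T y)"
proof -
  have "x - ereal w \<le> T y" for y
    using assms[of y] by (cases x; cases "T y") auto
  then have "x - ereal w \<le> (INF y. T y)" by (rule INF_greatest)
  then show ?thesis by (cases x; cases "INF y. T y") auto
qed

lemma ereal_diff_aux:
  "(a::ereal) \<noteq> - \<infinity> \<Longrightarrow> b \<noteq> -\<infinity> \<Longrightarrow> ereal (p + q) - (a + b) \<le> (ereal p - a) + (ereal q - b)"
  by (cases a; cases b) auto

lemma exp_ereal_add:
  assumes "a \<ge> 0" "b \<noteq> -\<infinity>"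
  shows "exp_ereal (a + b) = exp_ereal a * exp_ereal b"
  using assms by (cases a; cases b) (auto simp: exp_ereal_def exp_add ennreal_mult ennreal_top_mult)

lemma exp_ereal_INF_bound:
  assumes I: "\<And>y. I \<le> exp_ereal (a y)" and m: "\<And>y. a y \<ge> ereal m"
  shows "I \<le> exp_ereal (INF y. a y)"
proof -
  have vm: "(INF y. a y) \<ge> ereal m" using m by (rule INF_greatest)
  show ?thesis
  proof (cases "INF y. a y")
    case PInf then show ?thesis by (simp add: exp_ereal_def)
  next
    case MInf then show ?thesis using vm by simp
  next
    case (real r)
    have "I \<le> ennreal (exp r)"
    proof (rule ennreal_le_epsilon)
      fix e :: real assume e: "0 < e"
      define d where "d = ln (1 + e / exp r)"
      have d: "d > 0" using e by (simp add: d_def ln_gt_zero)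
      have "(INF y. a y) < ereal (r + d)" using real d by simp
      then obtain y where y: "a y < ereal (r + d)" by (auto simp: INF_less_iff)
      have "I \<le> exp_ereal (a y)" by (rule I)
      also have "\<dots> \<le> exp_ereal (ereal (r + d))" using y by (intro exp_ereal_mono) auto
      also have "\<dots> = ennreal (exp r * (1 + e / exp r))"
        using e by (simp add: exp_ereal_def d_def exp_add add_pos_pos)
      also have "exp r * (1 + e / exp r) = exp r + e" by (simp add: field_simps)
      also have "ennreal (exp r + e) = ennreal (exp r) + ennreal e"
        using e by (intro ennreal_plus) auto
      finally show "I \<le> ennreal (exp r) + ennreal e" .
    qed
    then show ?thesis using real by (simp add: exp_ereal_def)
  qed
qed

lemma lap_pair:
  assumes "is_prob_on_borel M1" "is_prob_on_borel M2"
  shows "lap (M1 \<Otimes>\<^sub>M M2) (y1, y2) = lap M1 y1 * lap M2 y2"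
proof -
  have sM: "sigma_finite_measure M2" using pob_D(1)[OF assms(2)] prob_space_imp_sigma_finite by blast
  have "lap (M1 \<Otimes>\<^sub>M M2) (y1, y2) = (\<integral>\<^sup>+z. ennreal (exp (y1 \<bullet> fst z)) * ennreal (exp (y2 \<bullet> snd z)) \<partial>(M1 \<Otimes>\<^sub>M M2))"
    unfolding lap_def by (intro nn_integral_cong) (auto simp: exp_add ennreal_mult)
  also have "\<dots> = lap M1 y1 * lap M2 y2"
    unfolding lap_def by (intro pair_prod_int[OF sM] pob_measI[OF assms(1)] pob_measI[OF assms(2)] expm)
  finally show ?thesis .
qed

lemma legendre_pair:
  fixes M1 :: "'a::euclidean_space measure" and M2 :: "'b::euclidean_space measure"
  assumes p1: "is_prob_on_borel M1" and p2: "is_prob_on_borel M2"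
    and b: "0 < \<beta>1" "0 < \<beta>2"
  shows "legendre_log_laplace (symmetrization (M1 \<Otimes>\<^sub>M M2)) ((x1, x2) /\<^sub>R max \<beta>1 \<beta>2)
     \<le> legendre_log_laplace (symmetrization M1) (x1 /\<^sub>R \<beta>1) + legendre_log_laplace (symmetrization M2) (x2 /\<^sub>R \<beta>2)"
  unfolding legendre_log_laplace_def[of "symmetrization (M1 \<Otimes>\<^sub>M M2)"]
proof (rule SUP_least)
  fix y :: "'a \<times> 'b" assume "y \<in> UNIV"
  obtain y1 y2 where yy: "y = (y1, y2)" by (cases y)
  let ?\<beta> = "max \<beta>1 \<beta>2"
  let ?L1 = "log_laplace (symmetrization M1) y1"
  let ?L2 = "log_laplace (symmetrization M2) y2"
  have S1: "is_prob_on_borel (symmetrization M1)" using pob_sym[OF p1] .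
  have S2: "is_prob_on_borel (symmetrization M2)" using pob_sym[OF p2] .
  have P: "is_prob_on_borel (M1 \<Otimes>\<^sub>M M2)" using pob_pair[OF p1 p2] .
  have lsym: "lap (symmetrization (M1 \<Otimes>\<^sub>M M2)) y = lap (symmetrization M1) y1 * lap (symmetrization M2) y2"
    unfolding yy sym_lap[OF P] sym_lap[OF p1] sym_lap[OF p2]
    using lap_pair[OF p1 p2, of y1 y2] lap_pair[OF p1 p2, of "-y1" "-y2"] by (simp add: ac_simps)
  have LL: "log_laplace (symmetrization (M1 \<Otimes>\<^sub>M M2)) y = ?L1 + ?L2"
    unfolding log_laplace_lap lsym by (intro ln_ennreal_mult lap_nonzero S1 S2)
  have ip: "((x1, x2) /\<^sub>R ?\<beta>) \<bullet> y = (x1 /\<^sub>R ?\<beta>) \<bullet> y1 + (x2 /\<^sub>R ?\<beta>) \<bullet> y2" by (simp add: yy)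
  have "ereal (((x1, x2) /\<^sub>R ?\<beta>) \<bullet> y) - log_laplace (symmetrization (M1 \<Otimes>\<^sub>M M2)) y
      \<le> (ereal ((x1 /\<^sub>R ?\<beta>) \<bullet> y1) - ?L1) + (ereal ((x2 /\<^sub>R ?\<beta>) \<bullet> y2) - ?L2)"
    unfolding LL ip by (intro ereal_diff_aux loglap_not_minf S1 S2)
  also have "\<dots> \<le> legendre_log_laplace (symmetrization M1) (x1 /\<^sub>R ?\<beta>) + legendre_log_laplace (symmetrization M2) (x2 /\<^sub>R ?\<beta>)"
    unfolding legendre_log_laplace_def by (intro add_mono SUP_upper) auto
  also have "\<dots> \<le> legendre_log_laplace (symmetrization M1) (x1 /\<^sub>R \<beta>1) + legendre_log_laplace (symmetrization M2) (x2 /\<^sub>R \<beta>2)"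
    using b by (intro add_mono legendre_mono p1 p2) auto
  finally show "ereal (((x1, x2) /\<^sub>R ?\<beta>) \<bullet> y) - log_laplace (symmetrization (M1 \<Otimes>\<^sub>M M2)) y
      \<le> legendre_log_laplace (symmetrization M1) (x1 /\<^sub>R \<beta>1) + legendre_log_laplace (symmetrization M2) (x2 /\<^sub>R \<beta>2)" .
qed



lemma IC_prod:
  fixes M1 :: "'a::euclidean_space measure" and M2 :: "'b::euclidean_space measure"
  assumes p1: "is_prob_on_borel M1" and p2: "is_prob_on_borel M2"
    and b1: "0 < \<beta>1" and b2: "0 < \<beta>2" and ic1: "IC \<beta>1 M1" and ic2: "IC \<beta>2 M2"
  shows "IC (max \<beta>1 \<beta>2) (M1 \<Otimes>\<^sub>M M2)"
proof -
  define W1 where "W1 z = legendre_log_laplace (symmetrization M1) (z /\<^sub>R \<beta>1)" for z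
  define W2 where "W2 z = legendre_log_laplace (symmetrization M2) (z /\<^sub>R \<beta>2)" for z
  define W where "W z = legendre_log_laplace (symmetrization (M1 \<Otimes>\<^sub>M M2)) (z /\<^sub>R max \<beta>1 \<beta>2)" for z
  have WW: "W (a, b) \<le> W1 a + W2 b" for a b
    unfolding W_def W1_def W2_def by (rule legendre_pair[OF p1 p2 b1 b2])
  have W1pos: "W1 z \<ge> 0" for z unfolding W1_def by (intro legendre_nonneg pob_sym p1)
  have W2pos: "W2 z \<ge> 0" for z unfolding W2_def by (intro legendre_nonneg pob_sym p2)
  have tau1: "property_tau M1 W1" using ic1 unfolding IC_def W1_def .
  have tau2: "property_tau M2 W2" using ic2 unfolding IC_def W2_def .
  have P1: "prob_space M1" and P2: "prob_space M2" using p1 p2 by (auto dest: pob_D)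
  have sM2: "sigma_finite_measure M2" using P2 prob_space_imp_sigma_finite by blast
  have sp: "sets (M1 \<Otimes>\<^sub>M M2) = sets borel" using pob_D(2)[OF pob_pair[OF p1 p2]] .
  have "property_tau (M1 \<Otimes>\<^sub>M M2) W"
    unfolding property_tau_def
  proof (intro allI impI)
    fix f :: "'a \<times> 'b \<Rightarrow> real"
    assume fm: "f \<in> borel_measurable borel" and fb: "bounded (range f)"
    obtain B where B: "\<And>z. \<bar>f z\<bar> \<le> B" using fb unfolding bounded_real by auto
    have fM: "f \<in> borel_measurable (M1 \<Otimes>\<^sub>M M2)" by (rule sets_measI[OF sp fm])
    have fsec: "(\<lambda>y2. f (y1, y2)) \<in> borel_measurable borel" for y1
    proof -
      have "(\<lambda>y2::'b. (y1, y2)) \<in> borel_measurable borel" by (intro cont_meas continuous_intros)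
      then show ?thesis using fm by (rule measurable_compose)
    qed
    define F where "F y1 = (\<integral>\<^sup>+ y2. ennreal (exp (- f (y1, y2))) \<partial>M2)" for y1
    have Fm: "F \<in> borel_measurable M1"
    proof -
      have [measurable]: "f \<in> borel_measurable (M1 \<Otimes>\<^sub>M M2)" by (rule fM)
      show ?thesis unfolding F_def
        by (rule sigma_finite_measure.borel_measurable_nn_integral[OF sM2]) simp
    qed
    have Fb: "ennreal (exp (- B)) \<le> F y1 \<and> F y1 \<le> ennreal (exp B)" for y1
    proof -
      have "(\<integral>\<^sup>+ y2. ennreal (exp (- B)) \<partial>M2) \<le> F y1" unfolding F_def
        using B by (intro nn_integral_mono ennreal_leI) (simp add: abs_le_iff)
      moreover have "F y1 \<le> (\<integral>\<^sup>+ y2. ennreal (exp B) \<partial>M2)" unfolding F_def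
        using B by (intro nn_integral_mono ennreal_leI) (simp add: abs_le_iff)
      ultimately show ?thesis using prob_space.emeasure_space_1[OF P2] by simp
    qed
    have F0: "0 < enn2real (F y1)" for y1
      using Fb[of y1] by (metis ennreal_eq_0_iff enn2real_positive_iff exp_gt_zero not_le order.strict_trans1
          ennreal_less_top le_less_trans less_le top.not_eq_extremum zero_less_iff_neq_zero order.not_eq_order_implies_strict)
    have Ftop: "F y1 \<noteq> top" for y1 using Fb[of y1] by (metis ennreal_neq_top neq_top_trans)
    define g where "g y1 = - ln (enn2real (F y1))" for y1
    have Fg: "F y1 = ennreal (exp (- g y1))" for y1
      unfolding g_def using F0[of y1] Ftop[of y1] by (simp add: ennreal_enn2real_if)
    have gm: "g \<in> borel_measurable borel"
    proof -
      have [measurable]: "F \<in> borel_measurable borel" using Fm pob_meas[OF p1] by metis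
      show ?thesis unfolding g_def by measurable
    qed
    have gB: "\<bar>g y1\<bar> \<le> B" for y1
    proof -
      have "exp (- B) \<le> enn2real (F y1)" "enn2real (F y1) \<le> exp B"
        using Fb[of y1] Ftop[of y1] by (auto simp: enn2real_le ennreal_le_iff2 top.not_eq_extremum
            intro: enn2real_mono[where a="ennreal (exp (-B))", simplified] )
      then have "ln (exp (- B)) \<le> ln (enn2real (F y1))" "ln (enn2real (F y1)) \<le> ln (exp B)"
        using F0[of y1] by (auto simp del: ln_exp)
      then show ?thesis unfolding g_def by simp
    qed
    have gb: "bounded (range g)" unfolding bounded_real using gB by auto
    define hy where "hy y1 = inf_conv W2 (\<lambda>y2. f (y1, y2))" for y1
    have hyB: "hy y1 x2 \<ge> ereal (- B)" for y1 x2
      unfolding hy_def inf_conv_def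
    proof (rule INF_greatest)
      fix y2 :: 'b assume "y2 \<in> UNIV"
      have "ereal (- B) \<le> ereal (f (y1, y2))" using B[of "(y1, y2)"] by simp
      also have "\<dots> \<le> W2 (x2 - y2) + ereal (f (y1, y2))" using W2pos[of "x2 - y2"]
        by (metis add.commute add_increasing2 order_refl)
      finally show "ereal (- B) \<le> W2 (x2 - y2) + ereal (f (y1, y2))" .
    qed
    have hyf: "hy y1 x2 \<noteq> -\<infinity>" for y1 x2 using hyB[of y1 x2] by auto
    have hyI: "(\<integral>\<^sup>+ x2. exp_ereal (hy y1 x2) \<partial>M2) \<le> ennreal (exp (g y1))" for y1
    proof -
      have fb1: "bounded (range (\<lambda>y2. f (y1, y2)))" by (rule bounded_subset[OF fb]) auto
      have t: "(\<integral>\<^sup>+ x2. exp_ereal (hy y1 x2) \<partial>M2) * F y1 \<le> 1"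
        using tau2 fsec[of y1] fb1 unfolding property_tau_def hy_def F_def by blast
      have "(\<integral>\<^sup>+ x2. exp_ereal (hy y1 x2) \<partial>M2)
          = (\<integral>\<^sup>+ x2. exp_ereal (hy y1 x2) \<partial>M2) * F y1 * ennreal (exp (g y1))"
      proof -
        have "ennreal (exp (- g y1)) * ennreal (exp (g y1)) = 1"
          by (simp add: ennreal_mult[symmetric] exp_minus)
        then show ?thesis unfolding Fg by (simp add: mult.assoc)
      qed
      also have "\<dots> \<le> 1 * ennreal (exp (g y1))" using t by (rule mult_right_mono) simp
      finally show ?thesis by simp
    qed
    let ?h = "inf_conv W f"
    have key: "?h (x1, x2) \<le> W1 (x1 - y1) + hy y1 x2" for x1 x2 y1
    proof (cases "W1 (x1 - y1)")
      case PInf then show ?thesis using hyf[of y1 x2] by simp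
    next
      case MInf then show ?thesis using W1pos[of "x1 - y1"] by simp
    next
      case (real w)
      show ?thesis unfolding real hy_def inf_conv_def[of W2]
      proof (rule ereal_le_add_INF)
        fix y2 :: 'b
        have "?h (x1, x2) \<le> W ((x1, x2) - (y1, y2)) + ereal (f (y1, y2))"
          unfolding inf_conv_def by (rule INF_lower) auto
        also have "\<dots> \<le> (W1 (x1 - y1) + W2 (x2 - y2)) + ereal (f (y1, y2))"
          using WW[of "x1 - y1" "x2 - y2"] by (intro add_right_mono) simp
        also have "\<dots> = ereal w + (W2 (x2 - y2) + ereal (f (y1, y2)))"
          unfolding real by (simp add: add.assoc)
        finally show "?h (x1, x2) \<le> ereal w + (W2 (x2 - y2) + ereal (f (y1, y2)))" .
      qed
    qed
    have inner: "(\<integral>\<^sup>+ x2. exp_ereal (?h (x1, x2)) \<partial>M2) \<le> exp_ereal (W1 (x1 - y1) + ereal (g y1))" for x1 y1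
    proof (cases "W1 (x1 - y1) = \<infinity>")
      case True then show ?thesis by (simp add: exp_ereal_def)
    next
      case False
      have fin: "exp_ereal (W1 (x1 - y1)) < top"
        using False W1pos[of "x1 - y1"] by (cases "W1 (x1 - y1)") (auto simp: exp_ereal_def)
      have "(\<integral>\<^sup>+ x2. exp_ereal (?h (x1, x2)) \<partial>M2) \<le> (\<integral>\<^sup>+ x2. exp_ereal (W1 (x1 - y1)) * exp_ereal (hy y1 x2) \<partial>M2)"
        by (intro nn_integral_mono) (metis key exp_ereal_mono exp_ereal_add W1pos hyf)
      also have "\<dots> \<le> exp_ereal (W1 (x1 - y1)) * (\<integral>\<^sup>+ x2. exp_ereal (hy y1 x2) \<partial>M2)"
        by (rule nn_integral_cmult_le[OF fin])
      also have "\<dots> \<le> exp_ereal (W1 (x1 - y1)) * ennreal (exp (g y1))"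
        by (intro mult_left_mono hyI) simp
      also have "\<dots> = exp_ereal (W1 (x1 - y1) + ereal (g y1))"
        using W1pos[of "x1 - y1"] by (subst exp_ereal_add) (auto simp: exp_ereal_def)
      finally show ?thesis .
    qed
    have inner2: "(\<integral>\<^sup>+ x2. exp_ereal (?h (x1, x2)) \<partial>M2) \<le> exp_ereal (inf_conv W1 g x1)" for x1
      unfolding inf_conv_def[of W1]
    proof (rule exp_ereal_INF_bound[where m="- B"])
      fix y1 :: 'a
      show "(\<integral>\<^sup>+ x2. exp_ereal (?h (x1, x2)) \<partial>M2) \<le> exp_ereal (W1 (x1 - y1) + ereal (g y1))" by (rule inner)
    next
      fix y1 :: 'a
      have "ereal (- B) \<le> ereal (g y1)" using gB[of y1] by simp
      also have "\<dots> \<le> W1 (x1 - y1) + ereal (g y1)" using W1pos[of "x1 - y1"]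
        by (metis add.commute add_increasing2 order_refl)
      finally show "ereal (- B) \<le> W1 (x1 - y1) + ereal (g y1)" .
    qed
    have I1: "(\<integral>\<^sup>+ z. exp_ereal (?h z) \<partial>(M1 \<Otimes>\<^sub>M M2)) \<le> (\<integral>\<^sup>+ x1. exp_ereal (inf_conv W1 g x1) \<partial>M1)"
    proof -
      have "(\<integral>\<^sup>+ z. exp_ereal (?h z) \<partial>(M1 \<Otimes>\<^sub>M M2)) \<le> (\<integral>\<^sup>+ x1. \<integral>\<^sup>+ x2. exp_ereal (?h (x1, x2)) \<partial>M2 \<partial>M1)"
        by (rule nn_integral_pair_le[OF sM2])
      also have "\<dots> \<le> (\<integral>\<^sup>+ x1. exp_ereal (inf_conv W1 g x1) \<partial>M1)"
        by (intro nn_integral_mono inner2)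
      finally show ?thesis .
    qed
    have I2: "(\<integral>\<^sup>+ z. ennreal (exp (- f z)) \<partial>(M1 \<Otimes>\<^sub>M M2)) = (\<integral>\<^sup>+ x1. ennreal (exp (- g x1)) \<partial>M1)"
    proof -
      have [measurable]: "f \<in> borel_measurable (M1 \<Otimes>\<^sub>M M2)" by (rule fM)
      have "(\<integral>\<^sup>+ z. ennreal (exp (- f z)) \<partial>(M1 \<Otimes>\<^sub>M M2)) = (\<integral>\<^sup>+ x1. F x1 \<partial>M1)"
        unfolding F_def by (rule sigma_finite_measure.nn_integral_fst[OF sM2, symmetric]) simp
      then show ?thesis by (simp add: Fg)
    qed
    have t1: "(\<integral>\<^sup>+ x1. exp_ereal (inf_conv W1 g x1) \<partial>M1) * (\<integral>\<^sup>+ x1. ennreal (exp (- g x1)) \<partial>M1) \<le> 1"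
      using tau1 gm gb unfolding property_tau_def by blast
    show "(\<integral>\<^sup>+ z. exp_ereal (?h z) \<partial>(M1 \<Otimes>\<^sub>M M2)) * (\<integral>\<^sup>+ z. ennreal (exp (- f z)) \<partial>(M1 \<Otimes>\<^sub>M M2)) \<le> 1"
      unfolding I2 using I1 t1 by (meson mult_right_mono order_trans zero_le)
  qed
  then show ?thesis unfolding IC_def W_def .
qed



lemma IC_conv:
  fixes N1 N2 :: "'e::euclidean_space measure"
  assumes "is_prob_on_borel N1" "\<gamma>1 > 0" "IC \<gamma>1 N1"
    and "is_prob_on_borel N2" "\<gamma>2 > 0" "IC \<gamma>2 N2"
  shows "IC (max \<gamma>1 \<gamma>2) (conv N1 N2)"
proof -
  have P: "IC (max \<gamma>1 \<gamma>2) (N1 \<Otimes>\<^sub>M N2)" using IC_prod assms by blast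
  have lin: "linear (\<lambda>z::'e \<times> 'e. fst z + snd z)"
    by (intro linear_compose_add linear_fst linear_snd)
  have "IC (max \<gamma>1 \<gamma>2) (distr (N1 \<Otimes>\<^sub>M N2) borel (\<lambda>(x, y). x + y))"
    by (rule IC_affine[OF pob_pair[OF assms(1,4)] _ P lin, where c=0])
       (use assms in auto)
  then show ?thesis unfolding conv_def .
qed

lemma IC_sym:
  fixes M :: "'a::euclidean_space measure"
  assumes "is_prob_on_borel M" "\<beta> > 0" "IC \<beta> M"
  shows "IC \<beta> (symmetrization M)"
proof -
  have "IC \<beta> (distr M borel uminus)"
    by (rule IC_affine[OF assms, where A=uminus and c=0]) (auto simp: linear_uminus)
  then have R: "IC \<beta> (reflect M)" unfolding reflect_def .
  have "IC (max \<beta> \<beta>) (conv M (reflect M))"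
    by (rule IC_conv[OF assms pob_reflect[OF assms(1)] assms(2) R])
  then show ?thesis unfolding symmetrization_def by simp
qed

theorem proposition8:
  fixes M :: "'a::euclidean_space measure" and L :: "'a \<Rightarrow> 'b::euclidean_space"
    and M1 :: "'c::euclidean_space measure" and M2 :: "'d::euclidean_space measure"
    and N1 N2 :: "'e::euclidean_space measure"
    and \<beta> \<beta>1 \<beta>2 \<gamma>1 \<gamma>2 :: real
  assumes "is_prob_on_borel M" "\<beta> > 0" "IC \<beta> M"
    and "is_prob_on_borel M1" "\<beta>1 > 0" "IC \<beta>1 M1"
    and "is_prob_on_borel M2" "\<beta>2 > 0" "IC \<beta>2 M2"
    and "is_prob_on_borel N1" "\<gamma>1 > 0" "IC \<gamma>1 N1"
    and "is_prob_on_borel N2" "\<gamma>2 > 0" "IC \<gamma>2 N2"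
  shows "((\<exists>A c. linear A \<and> (\<forall>x. L x = A x + c)) \<longrightarrow> IC \<beta> (distr M borel L))
       \<and> IC (max \<beta>1 \<beta>2) (M1 \<Otimes>\<^sub>M M2)
       \<and> IC (max \<gamma>1 \<gamma>2) (conv N1 N2)
       \<and> IC \<beta> (symmetrization M)"
proof (intro conjI impI)
  assume "\<exists>A c. linear A \<and> (\<forall>x. L x = A x + c)"
  then obtain A c where "linear A" "\<forall>x. L x = A x + c" by blast
  then show "IC \<beta> (distr M borel L)" using IC_affine assms(1-3) by blast
next
  show "IC (max \<beta>1 \<beta>2) (M1 \<Otimes>\<^sub>M M2)" using IC_prod assms(4-9) by blast
next
  show "IC (max \<gamma>1 \<gamma>2) (conv N1 N2)" using IC_conv assms(10-15) by blast
next
  show "IC \<beta> (symmetrization M)" using IC_sym assms(1-3) by blast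
qed

end
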